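(* Let $\psi:(0,1]\to(0,\infty)$ with $\psi(1)=1$, $\lim_{r\to0+}\psi(r)=0$ and $I_\psi\subset(0,1)$, and let $f\in C^\psi(\mathbb{R}^d)$. There exists a constant $C=C(\psi)$ such that $$[f]_{C^\psi}\le C\big(\|f\|_{C^0}+[[f]]_{C^\psi}\big).$$
   Context: $g:(0,1]\to(0,\infty)$ is almost increasing if $c\,g(r)\le g(R)$ for some $c\in(0,1]$ and all $0<r\le R\le1$, almost decreasing if $g(R)\le Cg(r)$ for some $C\ge1$ and all $0<r\le R\le1$. $M_\psi=\inf\{\alpha: \psi(r)/r^\alpha\text{ almost decreasing on }(0,1]\}$, $m_\psi=\sup\{\alpha: \psi(r)/r^\alpha\text{ almost increasing on }(0,1]\}$, $I_\psi=[m_\psi,M_\psi]$. $\|f\|_{C^0}=\sup|f|$. $[f]_{C^\psi}=\sup_{x\in\mathbb{R}^d}\sup_{0<|h|\le1}\frac{|f(x+h)-f(x)|}{\psi(|h|)}$ and $[[f]]_{C^\psi}=\sup_{x\in\mathbb{R}^d}\sup_{0<|h|\le1}\frac{|f(x+h)-2f(x)+f(x-h)|}{\psi(|h|)}$. When $m_\psi\in(0,1]$, $C^\psi(\mathbb{R}^d)$ is the space of bounded continuous $f$ with $[f]_{C^\psi}<\infty$. *)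

theory Defs
  imports "HOL-Analysis.Analysis"
begin

definition almost_increasing :: "(real \<Rightarrow> real) \<Rightarrow> bool" where
  "almost_increasing g \<longleftrightarrow>
     (\<exists>c. 0 < c \<and> c \<le> 1 \<and> (\<forall>r R. 0 < r \<and> r \<le> R \<and> R \<le> 1 \<longrightarrow> c * g r \<le> g R))"

definition almost_decreasing :: "(real \<Rightarrow> real) \<Rightarrow> bool" where
  "almost_decreasing g \<longleftrightarrow>
     (\<exists>C. 1 \<le> C \<and> (\<forall>r R. 0 < r \<and> r \<le> R \<and> R \<le> 1 \<longrightarrow> g R \<le> C * g r))"

text \<open>Upper and lower indices, valued in the extended reals (inf of empty set = +infinity).\<close>
definition M_idx :: "(real \<Rightarrow> real) \<Rightarrow> ereal" where
  "M_idx \<psi> = Inf {ereal \<alpha> | \<alpha>. almost_decreasing (\<lambda>r. \<psi> r / r powr \<alpha>)}"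

definition m_idx :: "(real \<Rightarrow> real) \<Rightarrow> ereal" where
  "m_idx \<psi> = Sup {ereal \<alpha> | \<alpha>. almost_increasing (\<lambda>r. \<psi> r / r powr \<alpha>)}"

definition I_idx :: "(real \<Rightarrow> real) \<Rightarrow> ereal set" where
  "I_idx \<psi> = {m_idx \<psi> .. M_idx \<psi>}"

definition C0_norm :: "('a \<Rightarrow> real) \<Rightarrow> ereal" where
  "C0_norm f = (SUP x. ereal \<bar>f x\<bar>)"

definition holder_semi :: "(real \<Rightarrow> real) \<Rightarrow> ('a::real_normed_vector \<Rightarrow> real) \<Rightarrow> ereal" where
  "holder_semi \<psi> f = (SUP x. SUP h \<in> {h. 0 < norm h \<and> norm h \<le> 1}.
      ereal (\<bar>f (x + h) - f x\<bar> / \<psi> (norm h)))"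

definition holder_semi2 :: "(real \<Rightarrow> real) \<Rightarrow> ('a::real_normed_vector \<Rightarrow> real) \<Rightarrow> ereal" where
  "holder_semi2 \<psi> f = (SUP x. SUP h \<in> {h. 0 < norm h \<and> norm h \<le> 1}.
      ereal (\<bar>f (x + h) - 2 * f x + f (x - h)\<bar> / \<psi> (norm h)))"

definition C_psi :: "(real \<Rightarrow> real) \<Rightarrow> ('a::euclidean_space \<Rightarrow> real) set" where
  "C_psi \<psi> = {f. bounded (range f) \<and> continuous_on UNIV f \<and> holder_semi \<psi> f < \<infinity>}"

end

theory Submission imports Defs begin
lemma step1:
  fixes f :: "'a::real_normed_vector \<Rightarrow> real"
  assumes S: "\<forall>x h. 0<norm h \<and> norm h \<le> 1 \<longrightarrow> \<bar>f(x+h) - 2*f x + f(x-h)\<bar> \<le> S * \<psi>(norm h)"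
    and h: "0 < norm h" "norm h \<le> 1"
  shows "\<bar>f(x+h) - f x\<bar> \<le> \<bar>f(x + 2 *\<^sub>R h) - f x\<bar>/2 + S*\<psi>(norm h)/2"
proof -
  have "\<bar>f((x+h)+h) - 2*f (x+h) + f((x+h)-h)\<bar> \<le> S * \<psi>(norm h)" using S h by blast
  moreover have "(x+h)+h = x + 2 *\<^sub>R h" "(x+h)-h = x" by (simp_all add: scaleR_2 algebra_simps)
  ultimately have "\<bar>f(x + 2 *\<^sub>R h) - 2*f (x+h) + f x\<bar> \<le> S * \<psi>(norm h)" by simp
  thus ?thesis by (smt (verit) field_sum_of_halves)
qed

lemma iter:
  fixes f :: "'a::real_normed_vector \<Rightarrow> real"
  assumes S: "\<forall>x h. 0<norm h \<and> norm h \<le> 1 \<longrightarrow> \<bar>f(x+h) - 2*f x + f(x-h)\<bar> \<le> S * \<psi>(norm h)"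
  shows "\<forall>x h. 0 < norm h \<longrightarrow> 2^n * norm h \<le> 1 \<longrightarrow>
     \<bar>f(x+h) - f x\<bar> \<le> \<bar>f(x + (2^n) *\<^sub>R h) - f x\<bar>/2^n + S * (\<Sum>j<n. \<psi>(2^j*norm h)/2^(j+1))"
proof (induction n)
  case 0
  then show ?case by simp
next
  case (Suc n)
  show ?case
  proof (intro allI impI)
    fix x h assume h0: "0 < norm (h::'a)" and hn: "2 ^ Suc n * norm h \<le> 1"
    have h1: "norm h \<le> 1"
    proof -
      have "(1::real) \<le> 2^Suc n" by (rule one_le_power) simp
      hence "1 * norm h \<le> 2^Suc n * norm h" using h0 by (intro mult_right_mono) auto
      thus ?thesis using hn by simp
    qed
    have n2: "norm (2 *\<^sub>R h) = 2 * norm h" by simp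
    have "\<bar>f(x + 2 *\<^sub>R h) - f x\<bar> \<le> \<bar>f(x + (2^n) *\<^sub>R (2 *\<^sub>R h)) - f x\<bar>/2^n + S * (\<Sum>j<n. \<psi>(2^j*norm (2 *\<^sub>R h))/2^(j+1))"
    proof -
      have "0 < norm (2 *\<^sub>R h)" using h0 by simp
      moreover have "2^n * norm (2 *\<^sub>R h) \<le> 1" using hn n2 by (simp add: mult_ac)
      ultimately show ?thesis using Suc.IH by blast
    qed
    also have "x + (2^n) *\<^sub>R (2 *\<^sub>R h) = x + (2^Suc n) *\<^sub>R h" by (simp add: mult.commute)
    also have "(\<Sum>j<n. \<psi>(2^j*norm (2 *\<^sub>R h))/2^(j+1)) = 2 * (\<Sum>j<n. \<psi>(2^(Suc j)*norm h)/2^(Suc j+1))"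
      by (simp add: sum_distrib_left mult_ac)
    finally have A: "\<bar>f(x + 2 *\<^sub>R h) - f x\<bar> \<le> \<bar>f(x + (2^Suc n) *\<^sub>R h) - f x\<bar>/2^n + S * (2 * (\<Sum>j<n. \<psi>(2^(Suc j)*norm h)/2^(Suc j+1)))" .
    have B: "(\<Sum>j<Suc n. \<psi>(2^j*norm h)/2^(j+1)) = \<psi>(norm h)/2 + (\<Sum>j<n. \<psi>(2^(Suc j)*norm h)/2^(Suc j+1))"
      unfolding sum.lessThan_Suc_shift by simp
    show "\<bar>f(x+h) - f x\<bar> \<le> \<bar>f(x + (2^Suc n) *\<^sub>R h) - f x\<bar>/2^Suc n + S * (\<Sum>j<Suc n. \<psi>(2^j*norm h)/2^(j+1))"
    proof -
      define \<Sigma> where "\<Sigma> = (\<Sum>j<n. \<psi>(2^(Suc j)*norm h)/2^(Suc j+1))"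
      define X where "X = \<bar>f(x + (2^Suc n) *\<^sub>R h) - f x\<bar>"
      have e1: "X/2^Suc n = (X/2^n)/2" by simp
      have e2: "S*(2*\<Sigma>) = 2*(S*\<Sigma>)" "S * (\<psi>(norm h)/2 + \<Sigma>) = S*\<psi>(norm h)/2 + S*\<Sigma>" by (simp_all add: algebra_simps)
      have key: "\<And>U V Y W Z (X2::real). U \<le> V/2 + Z/2 \<Longrightarrow> V \<le> Y + 2*W \<Longrightarrow> X2 = Y/2 \<Longrightarrow> U \<le> X2 + (Z/2+W)" by linarith
      have "\<bar>f(x+h) - f x\<bar> \<le> X/2^Suc n + (S*\<psi>(norm h)/2 + S*\<Sigma>)"
        apply (rule key[OF step1[OF S h0 h1, of x]])
        using A e1 e2 unfolding \<Sigma>_def[symmetric] X_def[symmetric] by simp_all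
      hence "\<bar>f(x+h) - f x\<bar> \<le> X/2^Suc n + S * (\<psi>(norm h)/2 + \<Sigma>)" using e2 by simp
      thus ?thesis unfolding B \<Sigma>_def X_def .
    qed
  qed
qed

lemma order_ad:
  assumes pos: "\<forall>r. 0 < r \<and> r \<le> 1 \<longrightarrow> 0 < \<psi> r" and one: "\<psi> 1 = 1"
    and ai: "almost_increasing (\<lambda>r. \<psi> r / r powr a)"
    and ad: "almost_decreasing (\<lambda>r. \<psi> r / r powr b)"
  shows "a \<le> b"
proof (rule ccontr)
  assume nab: "\<not> a \<le> b"
  obtain c where c: "0 < c" "c \<le> 1" "\<forall>r R. 0 < r \<and> r \<le> R \<and> R \<le> 1 \<longrightarrow> c * (\<psi> r / r powr a) \<le> \<psi> R / R powr a"
    using ai unfolding almost_increasing_def by blast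
  obtain C where C: "1 \<le> C" "\<forall>r R. 0 < r \<and> r \<le> R \<and> R \<le> 1 \<longrightarrow> \<psi> R / R powr b \<le> C * (\<psi> r / r powr b)"
    using ad unfolding almost_decreasing_def by blast
  define q where "q = c/(2*C)"
  have q: "0 < q" "q \<le> 1" using c C unfolding q_def by (auto simp: field_simps)
  define r where "r = q powr (1/(a-b))"
  have r0: "0 < r" using q unfolding r_def by simp
  have r1: "r \<le> 1" unfolding r_def using q nab by (intro powr_le1) auto
  have rab: "r powr (a-b) = q" unfolding r_def using q nab by (simp add: powr_powr)
  have "c * (\<psi> r / r powr a) \<le> \<psi> 1 / 1 powr a" using c(3) r0 r1 by blast
  hence h1: "c * \<psi> r \<le> r powr a" using one r0 by (simp add: field_simps)
  have "\<psi> 1 / 1 powr b \<le> C * (\<psi> r / r powr b)" using C(2) r0 r1 by blast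
  hence h2: "r powr b \<le> C * \<psi> r" using one r0 by (simp add: field_simps)
  have "r powr a = r powr b * q" proof -
    have "r powr a = r powr (b + (a-b))" by simp
    also have "\<dots> = r powr b * r powr (a-b)" by (rule powr_add)
    finally show ?thesis using rab by simp
  qed
  have "c * r powr b \<le> c * (C * \<psi> r)" using h2 c by simp
  also have "\<dots> = C * (c * \<psi> r)" by simp
  also have "\<dots> \<le> C * r powr a" using h1 C by simp
  also have "\<dots> = C * q * r powr b" using \<open>r powr a = r powr b * q\<close> by simp
  also have "\<dots> = (c/2) * r powr b" unfolding q_def using C by simp
  finally have "c * r powr b \<le> (c/2) * r powr b" .
  moreover have "0 < r powr b" using r0 by simp
  moreover have "0 < (c/2) * r powr b" using c \<open>0 < r powr b\<close> by simp
  moreover have "c * r powr b = (c/2) * r powr b + (c/2) * r powr b" by simp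
  ultimately show False by linarith
qed

lemma idx_beta:
  assumes pos: "\<forall>r. 0 < r \<and> r \<le> 1 \<longrightarrow> 0 < \<psi> r" and one: "\<psi> 1 = 1"
    and idx: "I_idx \<psi> \<subseteq> {0<..<1}"
  shows "\<exists>\<beta> K. \<beta> < 1 \<and> 1 \<le> K \<and> (\<forall>r R. 0 < r \<and> r \<le> R \<and> R \<le> 1 \<longrightarrow> \<psi> R / R powr \<beta> \<le> K * (\<psi> r / r powr \<beta>))"
proof -
  have ex: "\<exists>\<beta><1. almost_decreasing (\<lambda>r. \<psi> r / r powr \<beta>)"
  proof (cases "m_idx \<psi> \<le> M_idx \<psi>")
    case True
    hence "M_idx \<psi> \<in> I_idx \<psi>" unfolding I_idx_def by simp
    hence "M_idx \<psi> < 1" using idx by auto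
    then obtain x where "x \<in> {ereal \<alpha> | \<alpha>. almost_decreasing (\<lambda>r. \<psi> r / r powr \<alpha>)}" "x < 1"
      unfolding M_idx_def Inf_less_iff by blast
    thus ?thesis by auto
  next
    case False
    hence "M_idx \<psi> < m_idx \<psi>" by simp
    then obtain x where x: "x \<in> {ereal \<alpha> | \<alpha>. almost_increasing (\<lambda>r. \<psi> r / r powr \<alpha>)}" "M_idx \<psi> < x"
      unfolding m_idx_def less_Sup_iff by blast
    then obtain a where a: "x = ereal a" "almost_increasing (\<lambda>r. \<psi> r / r powr a)" by blast
    obtain y where y: "y \<in> {ereal \<alpha> | \<alpha>. almost_decreasing (\<lambda>r. \<psi> r / r powr \<alpha>)}" "y < x"
      using x(2) unfolding M_idx_def Inf_less_iff by blast
    then obtain b where b: "y = ereal b" "almost_decreasing (\<lambda>r. \<psi> r / r powr b)" by blast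
    have "b < a" using y(2) a b by simp
    moreover have "a \<le> b" using order_ad[OF pos one a(2) b(2)] .
    ultimately show ?thesis by simp
  qed
  then obtain \<beta> where "\<beta> < 1" "almost_decreasing (\<lambda>r. \<psi> r / r powr \<beta>)" by blast
  thus ?thesis unfolding almost_decreasing_def by blast
qed

lemma pow2_powr: "((2::real)^j) powr \<beta> = (2 powr \<beta>)^j"
proof -
  have "((2::real)^j) = 2 powr real j" by (simp add: powr_realpow)
  hence "((2::real)^j) powr \<beta> = (2 powr \<beta>) powr real j" by (simp add: powr_powr_swap)
  also have "\<dots> = (2 powr \<beta>)^j" by (simp add: powr_realpow)
  finally show ?thesis .
qed

lemma exist_n:
  assumes "0 < (t::real)" "t \<le> 1"
  shows "\<exists>n. 2^n * t \<le> 1 \<and> 1 < 2^(Suc n) * t"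
proof -
  obtain m where m: "1/t < (2::real)^m" using real_arch_pow[of "2::real" "1/t"] by auto
  define m0 where "m0 = (LEAST m. 1/t < (2::real)^m)"
  have m0: "1/t < (2::real)^m0" unfolding m0_def using m by (rule LeastI)
  have "1 \<le> 1/t" using assms by simp
  hence "m0 \<noteq> 0" using m0 by (intro notI) simp
  then obtain n where n: "m0 = Suc n" by (cases m0) auto
  have "\<not> 1/t < (2::real)^n" using n unfolding m0_def
    by (metis Suc_n_not_le_n Least_le)
  hence "2^n * t \<le> 1" using assms by (simp add: field_simps)
  moreover have "1 < 2^(Suc n) * t" using m0 n assms by (simp add: field_simps)
  ultimately show ?thesis by blast
qed

lemma main_real:
  fixes f :: "'a::real_normed_vector \<Rightarrow> real"
  assumes pos: "\<forall>r. 0 < r \<and> r \<le> 1 \<longrightarrow> 0 < \<psi> r" and one: "\<psi> 1 = 1"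
    and b1: "\<beta> < 1" and K1: "1 \<le> K"
    and Kd: "\<forall>r R. 0 < r \<and> r \<le> R \<and> R \<le> 1 \<longrightarrow> \<psi> R / R powr \<beta> \<le> K * (\<psi> r / r powr \<beta>)"
    and D: "\<forall>y. \<bar>f y\<bar> \<le> D"
    and S: "\<forall>x h. 0<norm h \<and> norm h \<le> 1 \<longrightarrow> \<bar>f(x+h) - 2*f x + f(x-h)\<bar> \<le> S * \<psi>(norm h)"
    and S0: "0 \<le> S"
    and h: "0 < norm h" "norm h \<le> 1"
  shows "\<bar>f(x+h) - f x\<bar> \<le> (4*K + K/(1 - 2 powr \<beta>/2)) * (D+S) * \<psi>(norm h)"
proof -
  define t where "t = norm h"
  define q where "q = 2 powr \<beta> / 2"
  define P where "P = \<psi> t"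
  have t: "0 < t" "t \<le> 1" using h t_def by auto
  have P0: "0 < P" using pos t P_def by auto
  have q0: "0 < q" unfolding q_def by simp
  have "2 powr \<beta> < 2 powr (1::real)" using b1 by (intro powr_less_mono) auto
  hence q1: "q < 1" unfolding q_def by simp
  have D0: "0 \<le> D" using D by (meson abs_ge_zero order_trans)
  obtain n where n: "2^n * t \<le> 1" "1 < 2^(Suc n) * t" using exist_n[OF t] by blast
  have it: "\<bar>f(x+h) - f x\<bar> \<le> \<bar>f(x + (2^n) *\<^sub>R h) - f x\<bar>/2^n + S * (\<Sum>j<n. \<psi>(2^j*t)/2^(j+1))"
    using iter[OF S, of n] h n(1) t_def by blast
  have "\<bar>f(x + (2^n) *\<^sub>R h) - f x\<bar> \<le> 2*D"
    using D[rule_format, of "x + (2^n) *\<^sub>R h"] D[rule_format, of x] by linarith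
  hence A1: "\<bar>f(x + (2^n) *\<^sub>R h) - f x\<bar>/2^n \<le> 2*D/2^n" by (simp add: divide_right_mono)
  have "1/2^n < 2*t" using n(2) by (simp add: field_simps)
  hence "2*D*(1/2^n) \<le> 2*D*(2*t)" using D0 by (intro mult_left_mono) auto
  hence "2*D/2^n \<le> 2*D*(2*t)" by simp
  moreover have "t \<le> K * P"
  proof -
    have "\<psi> 1 / 1 powr \<beta> \<le> K * (\<psi> t / t powr \<beta>)" using Kd t by blast
    hence "t powr \<beta> \<le> K * P" using one t unfolding P_def by (simp add: field_simps)
    moreover have "t powr 1 \<le> t powr \<beta>" using b1 t by (intro powr_mono') auto
    ultimately show ?thesis using t by simp
  qed
  moreover have "4*D*t \<le> 4*D*(K*P)" using D0 \<open>t \<le> K*P\<close> by (intro mult_left_mono) auto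
  ultimately have A2: "\<bar>f(x + (2^n) *\<^sub>R h) - f x\<bar>/2^n \<le> 4*D*K*P" using A1
    by (simp add: mult.assoc)
  have tb: "\<psi>(2^j*t)/2^(j+1) \<le> K*P/2 * q^j" if j: "j < n" for j
  proof -
    have "(2::real)^j \<le> 2^n" using j by (intro power_increasing) auto
    hence "2^j*t \<le> 2^n*t" using t by (intro mult_right_mono) auto
    hence "2^j*t \<le> 1" using n(1) by linarith
    moreover have "t \<le> 2^j*t" using t by simp
    ultimately have "\<psi>(2^j*t)/(2^j*t) powr \<beta> \<le> K * (P / t powr \<beta>)" using Kd t unfolding P_def by blast
    moreover have "(2^j*t) powr \<beta> = (2 powr \<beta>)^j * t powr \<beta>" using t by (simp add: powr_mult pow2_powr)
    ultimately have "\<psi>(2^j*t) \<le> K*P*(2 powr \<beta>)^j" using t by (simp add: field_simps)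
    hence "\<psi>(2^j*t)/2^(j+1) \<le> K*P*(2 powr \<beta>)^j/2^(j+1)" by (simp add: divide_right_mono)
    also have "\<dots> = K*P/2 * q^j" unfolding q_def by (simp add: power_divide)
    finally show ?thesis .
  qed
  have "(\<Sum>j<n. \<psi>(2^j*t)/2^(j+1)) \<le> (\<Sum>j<n. K*P/2 * q^j)" using tb by (intro sum_mono) auto
  also have "\<dots> = K*P/2 * ((1 - q^n)/(1-q))" proof -
    have "(\<Sum>j<n. K*P/2 * q^j) = K*P/2 * (\<Sum>j<n. q^j)" by (rule sum_distrib_left[symmetric])
    also have "(\<Sum>j<n. q^j) = (1 - q^n)/(1-q)" using q1 by (simp add: sum_gp_strict)
    finally show ?thesis .
  qed
  also have "\<dots> \<le> K*P/2 * (1/(1-q))" using q0 q1 K1 P0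
    by (intro mult_left_mono divide_right_mono) auto
  finally have A3: "(\<Sum>j<n. \<psi>(2^j*t)/2^(j+1)) \<le> K*P/(2*(1-q))" by simp
  have "S * (\<Sum>j<n. \<psi>(2^j*t)/2^(j+1)) \<le> S * (K*P/(2*(1-q)))" using A3 S0 by (rule mult_left_mono)
  have KP: "0 \<le> K*P/(1-q)" using K1 P0 q1 by simp
  have "\<bar>f(x+h) - f x\<bar> \<le> 4*D*K*P + S * (K*P/(2*(1-q)))"
    using it A2 \<open>S * _ \<le> _\<close> by linarith
  also have "\<dots> \<le> 4*K*P*(D+S) + (K*P/(1-q))*(D+S)"
  proof -
    have "4*D*K*P \<le> 4*K*P*(D+S)" using K1 P0 S0 by (simp add: algebra_simps)
    moreover have "S * (K*P/(2*(1-q))) \<le> (K*P/(1-q))*(D+S)"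
    proof -
      have "K*P/(2*(1-q)) = (K*P/(1-q))/2" by simp
      moreover have hl: "\<And>z::real. 0 \<le> z \<Longrightarrow> z/2 \<le> z" by simp
      ultimately have "K*P/(2*(1-q)) \<le> K*P/(1-q)" using hl[OF KP] by (simp only:)
      hence "S * (K*P/(2*(1-q))) \<le> S * (K*P/(1-q))" using S0 by (intro mult_left_mono) auto
      also have "\<dots> \<le> (D+S) * (K*P/(1-q))" using D0 KP by (intro mult_right_mono) auto
      finally show ?thesis by (simp add: mult.commute)
    qed
    ultimately show ?thesis by linarith
  qed
  also have "\<dots> = (4*K + K/(1 - 2 powr \<beta>/2)) * (D+S) * \<psi>(norm h)"
    unfolding q_def[symmetric] P_def t_def by (simp add: algebra_simps)
  finally show ?thesis .
qed

theorem lemma2p2: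
  fixes \<psi> :: "real \<Rightarrow> real"
  assumes pos: "\<forall>r. 0 < r \<and> r \<le> 1 \<longrightarrow> 0 < \<psi> r"
    and one: "\<psi> 1 = 1"
    and lim: "(\<psi> \<longlongrightarrow> 0) (at_right 0)"
    and idx: "I_idx \<psi> \<subseteq> {0<..<1}"
  shows "\<exists>C::real. 0 < C \<and> (\<forall>f::'a::euclidean_space \<Rightarrow> real. f \<in> C_psi \<psi> \<longrightarrow>
           holder_semi \<psi> f \<le> ereal C * (C0_norm f + holder_semi2 \<psi> f))"
proof -
  obtain \<beta> K where b1: "\<beta> < 1" and K1: "1 \<le> K"
    and Kd: "\<forall>r R. 0 < r \<and> r \<le> R \<and> R \<le> 1 \<longrightarrow> \<psi> R / R powr \<beta> \<le> K * (\<psi> r / r powr \<beta>)"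
    using idx_beta[OF pos one idx] by blast
  define C where "C = 4*K + K/(1 - 2 powr \<beta>/2)"
  have "2 powr \<beta> < 2 powr (1::real)" using b1 by (intro powr_less_mono) auto
  hence q1: "2 powr \<beta>/2 < 1" by simp
  have C0: "0 < C" unfolding C_def using K1 q1 by (intro add_pos_nonneg) auto
  have "\<forall>f::'a \<Rightarrow> real. holder_semi \<psi> f \<le> ereal C * (C0_norm f + holder_semi2 \<psi> f)"
  proof
    fix f :: "'a \<Rightarrow> real"
    define Z where "Z = C0_norm f"
    define W where "W = holder_semi2 \<psi> f"
    have Zup: "ereal \<bar>f y\<bar> \<le> Z" for y unfolding Z_def C0_norm_def by (rule SUP_upper) simp
    have Wup: "ereal (\<bar>f (x + h) - 2 * f x + f (x - h)\<bar> / \<psi> (norm h)) \<le> W"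
      if "0 < norm h" "norm h \<le> 1" for x h
    proof -
      have "ereal (\<bar>f (x + h) - 2 * f x + f (x - h)\<bar> / \<psi> (norm h))
          \<le> (SUP h \<in> {h. 0 < norm h \<and> norm h \<le> 1}. ereal (\<bar>f (x + h) - 2 * f x + f (x - h)\<bar> / \<psi> (norm h)))"
        using that by (intro SUP_upper) auto
      also have "\<dots> \<le> W" unfolding W_def holder_semi2_def by (rule SUP_upper) simp
      finally show ?thesis .
    qed
    have Z0: "0 \<le> Z" by (rule order_trans[OF _ Zup[of 0]]) simp
    obtain b :: 'a where b: "norm b = 1" using norm_Basis SOME_Basis by blast
    have W0: "0 \<le> W"
    proof -
      have "ereal (\<bar>f (0 + b) - 2 * f 0 + f (0 - b)\<bar> / \<psi> (norm b)) \<le> W" using b by (intro Wup) auto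
      moreover have "0 \<le> \<bar>f (0 + b) - 2 * f 0 + f (0 - b)\<bar> / \<psi> (norm b)" using b one by simp
      ultimately show ?thesis by (meson ereal_less_eq(5) order_trans)
    qed
    show "holder_semi \<psi> f \<le> ereal C * (C0_norm f + holder_semi2 \<psi> f)"
    proof (cases "Z = \<infinity> \<or> W = \<infinity>")
      case True
      hence "Z + W = \<infinity>" using Z0 W0 by auto
      hence "C0_norm f + holder_semi2 \<psi> f = \<infinity>" using Z_def W_def by simp
      show ?thesis unfolding \<open>C0_norm f + holder_semi2 \<psi> f = \<infinity>\<close> using C0 by simp
    next
      case False
      obtain D where D: "Z = ereal D" using Z0 False by (cases Z) auto
      obtain S where S: "W = ereal S" using W0 False by (cases W) auto
      have D0: "0 \<le> D" using Z0 D by simp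
      have S0: "0 \<le> S" using W0 S by simp
      have Df: "\<forall>y. \<bar>f y\<bar> \<le> D" using Zup D by simp
      have Sf: "\<forall>x h. 0<norm h \<and> norm h \<le> 1 \<longrightarrow> \<bar>f(x+h) - 2*f x + f(x-h)\<bar> \<le> S * \<psi>(norm h)"
      proof (intro allI impI)
        fix x h assume h: "0 < norm (h::'a) \<and> norm h \<le> 1"
        have "\<bar>f (x + h) - 2 * f x + f (x - h)\<bar> / \<psi> (norm h) \<le> S" using Wup[of h x] h S by simp
        moreover have "0 < \<psi> (norm h)" using pos h by auto
        ultimately show "\<bar>f(x+h) - 2*f x + f(x-h)\<bar> \<le> S * \<psi>(norm h)" by (simp add: field_simps)
      qed
      have "holder_semi \<psi> f \<le> ereal (C * (D + S))"
        unfolding holder_semi_def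
      proof (intro SUP_least)
        fix x h assume h: "h \<in> {h::'a. 0 < norm h \<and> norm h \<le> 1}"
        have "\<bar>f(x+h) - f x\<bar> \<le> C * (D+S) * \<psi>(norm h)"
          using main_real[OF pos one b1 K1 Kd Df Sf S0] h unfolding C_def by auto
        moreover have "0 < \<psi> (norm h)" using pos h by auto
        ultimately have "\<bar>f(x+h) - f x\<bar> / \<psi>(norm h) \<le> C * (D+S)" by (simp add: field_simps)
        thus "ereal (\<bar>f (x + h) - f x\<bar> / \<psi> (norm h)) \<le> ereal (C * (D + S))" by simp
      qed
      thus ?thesis using D S Z_def W_def by simp
    qed
  qed
  thus ?thesis using C0 by blast
qed
end
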